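(* Let $(X,\|\cdot\|)$ be a normed linear space, let $I$ be a non-trivial admissible ideal in $\mathbb{N}$, let $r\ge 0$, let $x=\{x_k\}_{k\in\mathbb{N}}$ be a sequence in $X$ and let $c\in\Lambda_x^S(I)$. Then $\|\xi-c\|\le r$ for all $\xi\in I\text{-}st\text{-}\mathrm{LIM}_x^r$.
   Context: An ideal $I$ in $\mathbb{N}$ is a family of subsets of $\mathbb{N}$ containing $\emptyset$, closed under finite unions and under taking subsets; it is non-trivial if $\mathbb{N}\notin I$ and admissible if $\{n\}\in I$ for every $n$. For a real sequence $(a_n)$, $I\text{-}\lim a_n=L$ means $\{n:|a_n-L|\ge\varepsilon\}\in I$ for all $\varepsilon>0$. For $A\subset\mathbb{N}$, $d_I(A)=I\text{-}\lim_{n\to\infty}\frac1n|\{k\le n:k\in A\}|$ when this $I$-limit exists; "$d_I(A)\ne0$" means it is not the case that $d_I(A)$ exists and equals $0$. A point $\lambda\in X$ is an $I$-statistical cluster point of $x$ if for every $\varepsilon>0$, $d_I(\{k:\|x_k-\lambda\|<\varepsilon\})\ne0$; $\Lambda_x^S(I)$ is the set of these points. For $r\ge0$, $x$ is $r$-$I$-statistically convergent to $\xi$ if for every $\varepsilon>0$ and $\delta>0$, $\{n\in\mathbb{N}:\frac1n|\{k\le n:\|x_k-\xi\|\ge r+\varepsilon\}|\ge\delta\}\in I$; $I\text{-}st\text{-}\mathrm{LIM}_x^r$ is the set of all such $\xi$. *)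

theory Defs
  imports "HOL-Analysis.Analysis"
begin

text \<open>Ideals on the natural numbers (index set nat; term 0 is harmless since
admissible ideals contain all finite sets).\<close>

definition is_ideal :: "nat set set \<Rightarrow> bool" where
  "is_ideal I \<longleftrightarrow> {} \<in> I \<and> (\<forall>A\<in>I. \<forall>B\<in>I. A \<union> B \<in> I) \<and> (\<forall>A\<in>I. \<forall>B. B \<subseteq> A \<longrightarrow> B \<in> I)"

definition nontrivial_ideal :: "nat set set \<Rightarrow> bool" where
  "nontrivial_ideal I \<longleftrightarrow> UNIV \<notin> I"

definition admissible_ideal :: "nat set set \<Rightarrow> bool" where
  "admissible_ideal I \<longleftrightarrow> (\<forall>n. {n} \<in> I)"

definition I_lim :: "nat set set \<Rightarrow> (nat \<Rightarrow> real) \<Rightarrow> real \<Rightarrow> bool" where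
  "I_lim I a L \<longleftrightarrow> (\<forall>\<epsilon>>0. {n. \<bar>a n - L\<bar> \<ge> \<epsilon>} \<in> I)"

definition dens :: "nat set \<Rightarrow> nat \<Rightarrow> real" where
  "dens A n = real (card {k \<in> {1..n}. k \<in> A}) / real n"

text \<open>"d_I(A) \<noteq> 0": it is not the case that d_I(A) exists and equals 0.\<close>
definition dI_nonzero :: "nat set set \<Rightarrow> nat set \<Rightarrow> bool" where
  "dI_nonzero I A \<longleftrightarrow> \<not> I_lim I (dens A) 0"

definition I_stat_cluster :: "nat set set \<Rightarrow> (nat \<Rightarrow> 'a::real_normed_vector) \<Rightarrow> 'a set" where
  "I_stat_cluster I x = {l. \<forall>\<epsilon>>0. dI_nonzero I {k. norm (x k - l) < \<epsilon>}}"

definition r_I_stat_LIM :: "nat set set \<Rightarrow> real \<Rightarrow> (nat \<Rightarrow> 'a::real_normed_vector) \<Rightarrow> 'a set" where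
  "r_I_stat_LIM I r x = {\<xi>. \<forall>\<epsilon>>0. \<forall>\<delta>>0.
     {n. dens {k. norm (x k - \<xi>) \<ge> r + \<epsilon>} n \<ge> \<delta>} \<in> I}"

end

theory Submission
  imports Defs
begin

lemma dens_mono: "A \<subseteq> B \<Longrightarrow> dens A n \<le> dens B n"
  unfolding dens_def
  by (intro divide_right_mono) (auto intro!: card_mono)

lemma dens_nonneg: "dens A n \<ge> 0"
  unfolding dens_def by simp

theorem theorem3p6:
  fixes I :: "nat set set" and r :: real and x :: "nat \<Rightarrow> 'a::real_normed_vector" and c :: 'a
  assumes "is_ideal I" and "nontrivial_ideal I" and "admissible_ideal I"
    and "r \<ge> 0"
    and "c \<in> I_stat_cluster I x"
  shows "\<forall>\<xi>\<in>r_I_stat_LIM I r x. norm (\<xi> - c) \<le> r"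
proof (intro ballI, rule ccontr)
  fix \<xi> assume xi: "\<xi> \<in> r_I_stat_LIM I r x" and nle: "\<not> norm (\<xi> - c) \<le> r"
  define e where "e = (norm (\<xi> - c) - r) / 2"
  have e: "e > 0" using nle by (simp add: e_def)
  define A where "A = {k. norm (x k - c) < e}"
  define B where "B = {k. norm (x k - \<xi>) \<ge> r + e}"
  have AB: "A \<subseteq> B"
  proof
    fix k assume "k \<in> A"
    hence "norm (x k - c) < e" by (simp add: A_def)
    moreover have "norm (\<xi> - c) \<le> norm (x k - \<xi>) + norm (x k - c)"
      using norm_triangle_ineq4[of "x k - c" "x k - \<xi>"] by (simp add: algebra_simps)
    ultimately show "k \<in> B" unfolding B_def using e_def by (simp add: field_simps)
  qed
  have "I_lim I (dens A) 0"
    unfolding I_lim_def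
  proof (intro allI impI)
    fix d :: real assume d: "d > 0"
    have inB: "{n. dens B n \<ge> d} \<in> I" using xi e d unfolding r_I_stat_LIM_def B_def by blast
    have "{n. \<bar>dens A n - 0\<bar> \<ge> d} \<subseteq> {n. dens B n \<ge> d}"
      using dens_mono[OF AB] dens_nonneg by (auto intro: order_trans)
    thus "{n. \<bar>dens A n - 0\<bar> \<ge> d} \<in> I" using inB assms(1) unfolding is_ideal_def by blast
  qed
  moreover have "dI_nonzero I A" using assms(5) e unfolding I_stat_cluster_def A_def by blast
  ultimately show False unfolding dI_nonzero_def by blast
qed

end
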